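(* Let $\upsilon$ be a positive integer, let $n,m$ be nonnegative integers, $N=\max\{n,m\}$, and let $p,q$ be real numbers with $p>(\upsilon+1)N+1$ and $q>-1$. Then $$\int_0^\infty \frac{x^{q}}{(1+x)^{p+q}}\,M_n(p,q,\upsilon;x)\,\mathfrak{M}_m(p,q,\upsilon;x)\,dx=\frac{n!\,\Gamma(p-n)\,\Gamma(q+1+\upsilon n)}{(p-1-n-\upsilon n)\,\Gamma(p+q-n)}\,\delta_{n,m},$$ where $\delta_{n,m}$ is the Kronecker delta.
   Context: $(a)_k=a(a+1)\cdots(a+k-1)$, $(a)_0=1$, denotes the Pochhammer symbol. For a positive integer $\upsilon$, a nonnegative integer $n$ and real parameters $p,q$ define $$M_n(p,q,\upsilon;x)=(-1)^n(q+1)_{\upsilon n}\sum_{j=0}^{n}(-1)^j\binom{n}{j}\frac{(n+1-p)_{\upsilon j}}{(q+1)_{\upsilon j}}(-x)^{\upsilon j},$$ $$\mathfrak{M}_n(p,q,\upsilon;x)=\sum_{r=0}^{n}\sum_{s=0}^{r}(-1)^{s+n}\binom{r}{s}\frac{(p+q-n)_r}{r!}\left(\frac{s+q+1}{\upsilon}\right)_n x^r(1+x)^{n-r}.$$ *)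

theory Defs
  imports "HOL-Analysis.Analysis"
begin

definition M_poly :: "nat \<Rightarrow> real \<Rightarrow> real \<Rightarrow> nat \<Rightarrow> real \<Rightarrow> real" where
  "M_poly n p q u x = (-1) ^ n * pochhammer (q + 1) (u * n) *
     (\<Sum>j=0..n. (-1) ^ j * real (n choose j) *
        pochhammer (real n + 1 - p) (u * j) / pochhammer (q + 1) (u * j) * (- x) ^ (u * j))"

definition frakM_poly :: "nat \<Rightarrow> real \<Rightarrow> real \<Rightarrow> nat \<Rightarrow> real \<Rightarrow> real" where
  "frakM_poly n p q u x = (\<Sum>r=0..n. \<Sum>s=0..r.
     (-1) ^ (s + n) * real (r choose s) * pochhammer (p + q - real n) r / fact r *
     pochhammer ((real s + q + 1) / real u) n * x ^ r * (1 + x) ^ (n - r))"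

end

theory Submission
  imports Defs
begin


lemma beta_halfline:
  fixes a b :: real
  assumes a: "a > 0" and b: "b > 0"
  shows "((\<lambda>x. x powr (a-1) / (1+x) powr (a+b)) has_integral Beta a b) {0<..}"
proof -
  define S where "S = {0<..<(1::real)}"
  define g where "g = (\<lambda>t::real. t / (1 - t))"
  define g' where "g' = (\<lambda>t::real. 1 / (1 - t)^2)"
  define f where "f = (\<lambda>x::real. x powr (a-1) / (1+x) powr (a+b))"
  have S: "S \<in> sets lebesgue" unfolding S_def by simp
  have der: "(g has_field_derivative g' t) (at t within S)" if "t \<in> S" for t
    using that unfolding g_def g'_def S_def
    by (auto intro!: derivative_eq_intros simp: field_simps power2_eq_square)
  have inj: "inj_on g S" unfolding g_def S_def inj_on_def by (auto simp: field_simps)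
  have img: "g ` S = {0<..}"
  proof
    show "g ` S \<subseteq> {0<..}" unfolding g_def S_def by auto
    show "{0<..} \<subseteq> g ` S"
    proof
      fix x :: real assume "x \<in> {0<..}"
      hence x: "x > 0" by simp
      have "x / (1 + x) \<in> S" using x unfolding S_def by (auto simp: field_simps)
      moreover have "g (x / (1 + x)) = x" using x unfolding g_def by (simp add: field_simps)
      ultimately show "x \<in> g ` S" by (metis image_eqI)
    qed
  qed
  have eq: "\<bar>g' t\<bar> * f (g t) = t powr (a - 1) * (1 - t) powr (b - 1)" if "t \<in> S" for t
  proof -
    from that have t: "0 < t" "t < 1" unfolding S_def by auto
    have 1: "1 + t / (1 - t) = 1 / (1 - t)" using t by (simp add: field_simps)
    have "\<bar>g' t\<bar> * f (g t) = (1 / (1-t)^2) * ((t / (1-t)) powr (a-1) / (1 / (1-t)) powr (a+b))"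
      unfolding g'_def f_def g_def 1 by simp
    also have "\<dots> = t powr (a-1) * ((1-t) powr (a+b) / ((1-t) powr (a-1) * (1-t) powr 2))"
    proof -
      have e1: "(t / (1-t)) powr (a-1) = t powr (a-1) / (1-t) powr (a-1)"
        using t by (simp add: powr_divide)
      have e2: "(1 / (1-t)) powr (a+b) = 1 / (1-t) powr (a+b)"
        using t by (simp add: powr_divide)
      have e3: "(1-t)^2 = (1-t) powr 2" using t by (simp add: powr_realpow)
      show ?thesis unfolding e1 e2 e3 by simp
    qed
    also have "(1-t) powr (a+b) / ((1-t) powr (a-1) * (1-t) powr 2) = (1-t) powr (b-1)"
    proof -
      have "(1-t) powr (a+b) = (1-t) powr (b-1) * ((1-t) powr (a-1) * (1-t) powr 2)"
        unfolding powr_add[symmetric] by (simp add: algebra_simps)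
      moreover have "(1-t) powr (a-1) * (1-t) powr 2 > 0" using t by simp
      ultimately show ?thesis by simp
    qed
    finally show ?thesis .
  qed
  have hi: "((\<lambda>t. t powr (a - 1) * (1 - t) powr (b - 1)) has_integral Beta a b) S"
    using has_integral_Beta_real[OF a b] unfolding S_def by (simp add: has_integral_Icc_iff_Ioo)
  have ai: "(\<lambda>t. t powr (a - 1) * (1 - t) powr (b - 1)) absolutely_integrable_on S"
    using hi by (subst absolutely_integrable_on_iff_nonneg) (auto simp: S_def)
  have "(\<lambda>x. \<bar>g' x\<bar> * f(g x)) absolutely_integrable_on S \<and>
           integral S (\<lambda>x. \<bar>g' x\<bar> * f (g x)) = Beta a b"
  proof
    show "(\<lambda>x. \<bar>g' x\<bar> * f(g x)) absolutely_integrable_on S"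
      using ai by (rule absolutely_integrable_spike[where S = "{}"]) (auto simp: eq)
    show "integral S (\<lambda>x. \<bar>g' x\<bar> * f (g x)) = Beta a b"
      using hi eq by (metis (no_types, lifting) integral_cong integral_unique)
  qed
  then have "f absolutely_integrable_on (g ` S) \<and> integral (g ` S) f = Beta a b"
    using has_absolute_integral_change_of_variables_1'[OF S der inj] by blast
  then have ai2: "f absolutely_integrable_on {0<..}" and ie: "integral {0<..} f = Beta a b"
    unfolding img by auto
  have "f integrable_on {0<..}" using ai2 by (rule set_lebesgue_integral_eq_integral(1))
  then have "(f has_integral integral {0<..} f) {0<..}" by (rule integrable_integral)
  then show ?thesis using ie unfolding f_def by simp
qed




definition Rep :: "nat \<Rightarrow> (real \<Rightarrow> real) \<Rightarrow> bool" where
  "Rep d f \<longleftrightarrow> (\<exists>c. \<forall>x. f x = (\<Sum>k\<le>d. c k * pochhammer (-x) k))"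

lemma Rep_const: "Rep 0 (\<lambda>x. a)"
  unfolding Rep_def by (rule exI[of _ "\<lambda>_. a"]) simp

lemma Rep_lin:
  assumes "Rep d f"
  shows "Rep (Suc d) (\<lambda>x. f x * (\<alpha> + \<beta> * x))"
proof -
  from assms obtain c where c: "\<And>x. f x = (\<Sum>k\<le>d. c k * pochhammer (-x) k)"
    unfolding Rep_def by blast
  define c' where "c' = (\<lambda>k. (if k \<le> d then c k * (\<alpha> + \<beta> * real k) else 0)
       - (if k = 0 then 0 else \<beta> * c (k - 1)))"
  have key: "(\<alpha> + \<beta> * x) * pochhammer (-x) k =
      (\<alpha> + \<beta> * real k) * pochhammer (-x) k - \<beta> * pochhammer (-x) (Suc k)" for x k
    by (simp add: pochhammer_Suc algebra_simps)
  have "f x * (\<alpha> + \<beta> * x) = (\<Sum>k\<le>Suc d. c' k * pochhammer (-x) k)" for x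
  proof -
    have "f x * (\<alpha> + \<beta> * x) = (\<Sum>k\<le>d. c k * ((\<alpha> + \<beta> * x) * pochhammer (-x) k))"
      unfolding c sum_distrib_right by (rule sum.cong) (simp_all add: mult_ac)
    also have "\<dots> = (\<Sum>k\<le>d. c k * (\<alpha> + \<beta> * real k) * pochhammer (-x) k)
          - (\<Sum>k\<le>d. \<beta> * c k * pochhammer (-x) (Suc k))"
      unfolding key by (simp add: sum_subtractf algebra_simps)
    also have "(\<Sum>k\<le>d. c k * (\<alpha> + \<beta> * real k) * pochhammer (-x) k) =
        (\<Sum>k\<le>Suc d. (if k \<le> d then c k * (\<alpha> + \<beta> * real k) else 0) * pochhammer (-x) k)"
      by simp
    also have "(\<Sum>k\<le>d. \<beta> * c k * pochhammer (-x) (Suc k)) =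
        (\<Sum>k\<le>Suc d. (if k = 0 then 0 else \<beta> * c (k - 1)) * pochhammer (-x) k)"
      by (subst sum.atMost_Suc_shift) simp
    finally show ?thesis unfolding c'_def by (simp add: sum_subtractf algebra_simps)
  qed
  then show ?thesis unfolding Rep_def by blast
qed

lemma Rep_poch:
  assumes "Rep d f"
  shows "Rep (d + t) (\<lambda>x. f x * pochhammer (A + B * x) t)"
proof (induction t)
  case 0
  then show ?case using assms by simp
next
  case (Suc t)
  have "Rep (Suc (d + t)) (\<lambda>x. (f x * pochhammer (A + B * x) t) * ((A + real t) + B * x))"
    by (rule Rep_lin[OF Suc])
  moreover have "(\<lambda>x. (f x * pochhammer (A + B * x) t) * ((A + real t) + B * x)) =
      (\<lambda>x. f x * pochhammer (A + B * x) (Suc t))"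
    by (simp add: pochhammer_Suc algebra_simps)
  ultimately show ?case by simp
qed

lemma alt_choose_choose:
  "(\<Sum>s\<le>r. (-1::real)^s * real (r choose s) * real (s choose k)) = (if r = k then (-1)^k else 0)"
proof (cases "k \<le> r")
  case False
  then show ?thesis by (auto intro!: sum.neutral)
next
  case True
  have "(\<Sum>s\<le>r. (-1::real)^s * real (r choose s) * real (s choose k)) =
        (\<Sum>s\<in>{k..r}. (-1::real)^s * real (r choose s) * real (s choose k))"
    by (rule sum.mono_neutral_right) auto
  also have "\<dots> = (\<Sum>s\<in>{k..r}. (-1::real)^s * real (r choose k) * real ((r - k) choose (s - k)))"
    by (rule sum.cong) (auto simp: choose_mult of_nat_mult[symmetric] simp del: of_nat_mult)
  also have "{k..r} = (\<lambda>t. t + k) ` {..r - k}"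
  proof
    show "{k..r} \<subseteq> (\<lambda>t. t + k) ` {..r - k}"
    proof
      fix s assume "s \<in> {k..r}"
      then show "s \<in> (\<lambda>t. t + k) ` {..r - k}" by (intro image_eqI[of _ _ "s - k"]) auto
    qed
  qed (use True in auto)
  also have "(\<Sum>s\<in>(\<lambda>t. t + k) ` {..r - k}. (-1::real)^s * real (r choose k) * real ((r - k) choose (s - k)))
      = (\<Sum>t\<le>r - k. (-1::real)^(t + k) * real (r choose k) * real ((r - k) choose t))"
    by (subst sum.reindex) (auto simp: inj_on_def)
  also have "\<dots> = (-1)^k * real (r choose k) * (\<Sum>t\<le>r - k. (-1::real)^t * real ((r - k) choose t))"
    by (simp add: sum_distrib_left power_add mult_ac)
  also have "\<dots> = (if r = k then (-1)^k else 0)"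
  proof (cases "r = k")
    case False
    then have "r - k > 0" using True by simp
    then show ?thesis using False by (simp add: choose_alternating_sum)
  qed simp
  finally show ?thesis .
qed

lemma poch_neg_nat: "pochhammer (- real s) k = (-1)^k * fact k * real (s choose k)"
proof -
  have "real (s choose k) = (-1)^k * pochhammer (- real s) k / fact k"
    by (simp add: binomial_gbinomial gbinomial_pochhammer)
  then have "(-1)^k * fact k * real (s choose k) = ((-1)^k * (-1)^k) * pochhammer (- real s) k"
    by simp
  also have "(-1::real)^k * (-1)^k = 1" by (simp add: power_mult_distrib[symmetric])
  finally show ?thesis by simp
qed

lemma E_ident:
  "(\<Sum>s\<le>r. (-1::real)^s * real (r choose s) * pochhammer (- real s) k) = (if r = k then fact k else 0)"
proof -
  have "(\<Sum>s\<le>r. (-1::real)^s * real (r choose s) * pochhammer (- real s) k) =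
     (-1)^k * fact k * (\<Sum>s\<le>r. (-1::real)^s * real (r choose s) * real (s choose k))"
    by (simp add: poch_neg_nat sum_distrib_left mult_ac)
  also have "\<dots> = (if r = k then fact k else 0)"
    by (simp add: alt_choose_choose power_mult_distrib[symmetric])
  finally show ?thesis .
qed

lemma Rep_alt_zero:
  assumes "Rep d f" "d < n"
  shows "(\<Sum>j\<le>n. (-1::real)^j * real (n choose j) * f (real j)) = 0"
proof -
  from assms obtain c where c: "\<And>x. f x = (\<Sum>k\<le>d. c k * pochhammer (-x) k)"
    unfolding Rep_def by blast
  have "(\<Sum>j\<le>n. (-1::real)^j * real (n choose j) * f (real j)) =
      (\<Sum>k\<le>d. c k * (\<Sum>j\<le>n. (-1::real)^j * real (n choose j) * pochhammer (- real j) k))"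
    unfolding c
  proof -
    have "(\<Sum>j\<le>n. (-1::real)^j * real (n choose j) * (\<Sum>k\<le>d. c k * pochhammer (- real j) k)) =
       (\<Sum>j\<le>n. \<Sum>k\<le>d. c k * ((-1::real)^j * real (n choose j) * pochhammer (- real j) k))"
      by (simp add: sum_distrib_left mult_ac)
    also have "\<dots> = (\<Sum>k\<le>d. \<Sum>j\<le>n. c k * ((-1::real)^j * real (n choose j) * pochhammer (- real j) k))"
      by (rule sum.swap)
    also have "\<dots> = (\<Sum>k\<le>d. c k * (\<Sum>j\<le>n. (-1::real)^j * real (n choose j) * pochhammer (- real j) k))"
      by (simp add: sum_distrib_left)
    finally show "(\<Sum>j\<le>n. (-1::real)^j * real (n choose j) * (\<Sum>k\<le>d. c k * pochhammer (- real j) k)) =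
       (\<Sum>k\<le>d. c k * (\<Sum>j\<le>n. (-1::real)^j * real (n choose j) * pochhammer (- real j) k))" .
  qed
  also have "\<dots> = 0" using assms(2) by (auto simp: E_ident intro!: sum.neutral)
  finally show ?thesis .
qed

lemma Rep_newton:
  assumes "Rep d f" "d \<le> m"
  shows "(\<Sum>r\<le>m. pochhammer a r / fact r *
            (\<Sum>s\<le>r. (-1::real)^s * real (r choose s) * f (real s))) = f (-a)"
proof -
  from assms obtain c where c: "\<And>x. f x = (\<Sum>k\<le>d. c k * pochhammer (-x) k)"
    unfolding Rep_def by blast
  have "(\<Sum>r\<le>m. pochhammer a r / fact r *
            (\<Sum>s\<le>r. (-1::real)^s * real (r choose s) * f (real s))) =
     (\<Sum>r\<le>m. pochhammer a r / fact r *
            (\<Sum>k\<le>d. c k * (\<Sum>s\<le>r. (-1::real)^s * real (r choose s) * pochhammer (- real s) k)))"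
  proof (rule sum.cong[OF refl])
    fix r
    have "(\<Sum>s\<le>r. (-1::real)^s * real (r choose s) * (\<Sum>k\<le>d. c k * pochhammer (- real s) k)) =
       (\<Sum>s\<le>r. \<Sum>k\<le>d. c k * ((-1::real)^s * real (r choose s) * pochhammer (- real s) k))"
      by (simp add: sum_distrib_left mult_ac)
    also have "\<dots> = (\<Sum>k\<le>d. \<Sum>s\<le>r. c k * ((-1::real)^s * real (r choose s) * pochhammer (- real s) k))"
      by (rule sum.swap)
    also have "\<dots> = (\<Sum>k\<le>d. c k * (\<Sum>s\<le>r. (-1::real)^s * real (r choose s) * pochhammer (- real s) k))"
      by (simp add: sum_distrib_left)
    finally show "pochhammer a r / fact r * (\<Sum>s\<le>r. (-1::real)^s * real (r choose s) * f (real s)) =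
       pochhammer a r / fact r * (\<Sum>k\<le>d. c k * (\<Sum>s\<le>r. (-1::real)^s * real (r choose s) * pochhammer (- real s) k))"
      unfolding c by simp
  qed
  also have "\<dots> = (\<Sum>r\<le>m. if r \<le> d then pochhammer a r * c r else 0)"
  proof (rule sum.cong[OF refl])
    fix r
    have "(\<Sum>k\<le>d. c k * (\<Sum>s\<le>r. (-1::real)^s * real (r choose s) * pochhammer (- real s) k))
        = (\<Sum>k\<le>d. if r = k then c r * fact r else 0)"
      unfolding E_ident by (rule sum.cong) auto
    also have "\<dots> = (if r \<le> d then c r * fact r else 0)"
      by simp
    finally show "pochhammer a r / fact r *
            (\<Sum>k\<le>d. c k * (\<Sum>s\<le>r. (-1::real)^s * real (r choose s) * pochhammer (- real s) k))
       = (if r \<le> d then pochhammer a r * c r else 0)" by simp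
  qed
  also have "\<dots> = (\<Sum>r\<in>{r\<in>{..m}. r \<le> d}. pochhammer a r * c r)"
    by (rule sum.inter_filter[symmetric]) simp
  also have "\<dots> = (\<Sum>r\<le>d. pochhammer a r * c r)"
    using assms(2) by (intro sum.cong) auto
  also have "\<dots> = f (-a)" unfolding c by (simp add: mult_ac)
  finally show ?thesis .
qed




lemma beta_gen:
  fixes al be :: real
  assumes "al > -1" "be - al - 1 > 0"
  shows "((\<lambda>x. x powr al / (1+x) powr be) has_integral
           (Gamma (al + 1) * Gamma (be - al - 1) / Gamma be)) {0<..}"
proof -
  have "((\<lambda>x. x powr ((al + 1) - 1) / (1+x) powr ((al+1) + (be - al - 1))) has_integral
          Beta (al + 1) (be - al - 1)) {0<..}"
    by (rule beta_halfline) (use assms in auto)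
  then show ?thesis by (simp add: Beta_def)
qed

lemma pw:
  fixes x q P :: real and k r m :: nat
  assumes "x > 0" "r \<le> m"
  shows "x powr q / (1 + x) powr P * x ^ k * (x ^ r * (1 + x) ^ (m - r)) =
         x powr (q + real k + real r) / (1 + x) powr (P - real m + real r)"
proof -
  have a: "x powr q * x ^ k * x ^ r = x powr (q + real k + real r)"
    using assms by (simp add: powr_add powr_realpow)
  have b: "(1 + x) ^ (m - r) / (1 + x) powr P = 1 / (1 + x) powr (P - real m + real r)"
  proof -
    have "(1 + x) ^ (m - r) = (1 + x) powr (real m - real r)"
      using assms by (simp add: powr_realpow[symmetric] of_nat_diff)
    then show ?thesis using assms
      by (simp add: powr_diff[symmetric] algebra_simps powr_minus_divide[symmetric]
          flip: powr_minus)
  qed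
  have "x powr q / (1 + x) powr P * x ^ k * (x ^ r * (1 + x) ^ (m - r)) =
       (x powr q * x ^ k * x ^ r) * ((1 + x) ^ (m - r) / (1 + x) powr P)" by simp
  also have "\<dots> = x powr (q + real k + real r) / (1 + x) powr (P - real m + real r)"
    unfolding a b by simp
  finally show ?thesis .
qed




lemma pos_not_nonpos_Int: "(x::real) > 0 \<Longrightarrow> x \<notin> \<int>\<^sub>\<le>\<^sub>0"
  by (auto dest: nonpos_Ints_nonpos)

lemma Gamma_shift:
  assumes "(x::real) > 0" shows "Gamma (x + real r) = pochhammer x r * Gamma x"
proof -
  have "Gamma x > 0" using assms by simp
  then show ?thesis using pochhammer_Gamma[OF pos_not_nonpos_Int[OF assms], of r] by (simp add: field_simps)
qed

lemma intA:
  fixes u m j :: nat and p q :: real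
  assumes u: "u > 0" and q: "q > -1" and pj: "p - real m - 1 - real (u*j) > 0"
  shows "((\<lambda>x. x powr q / (1 + x) powr (p + q) * x ^ (u*j) * frakM_poly m p q u x) has_integral
     (Gamma (p - real m - 1 - real (u*j)) / Gamma (p + q - real m) * (-1)^m *
        Gamma (q + 1 + real (u*j)) * pochhammer (- real j) m)) {0<..}"
proof -
  define co where "co r s = (-1) ^ (s + m) * real (r choose s) * pochhammer (p + q - real m) r / fact r
      * pochhammer ((real s + q + 1) / real u) m" for r s
  define h where "h r = (\<lambda>x::real. x powr (q + real (u*j) + real r) / (1 + x) powr (p + q - real m + real r))" for r
  define I where "I r = Gamma (q + real (u*j) + real r + 1) * Gamma (p - real m - 1 - real (u*j))
      / Gamma (p + q - real m + real r)" for r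
  have hI: "(h r has_integral I r) {0<..}" for r
  proof -
    have X: "((\<lambda>x. x powr (q + real (u*j) + real r) / (1+x) powr (p + q - real m + real r)) has_integral
           (Gamma ((q + real (u*j) + real r) + 1) * Gamma ((p + q - real m + real r) - (q + real (u*j) + real r) - 1)
             / Gamma (p + q - real m + real r))) {0<..}"
    proof (rule beta_gen)
      have nn: "0 \<le> real (u * j)" "0 \<le> real r" by simp_all
      show "q + real (u*j) + real r > -1" using q nn by linarith
      show "(p + q - real m + real r) - (q + real (u*j) + real r) - 1 > 0" using pj by simp
    qed
    have e: "(p + q - real m + real r) - (q + real (u*j) + real r) - 1 = p - real m - 1 - real (u*j)"
      by simp
    show ?thesis using X unfolding h_def I_def e .
  qed
  have sum_int: "((\<lambda>x. \<Sum>r\<in>{0..m}. \<Sum>s\<in>{0..r}. co r s * h r x) has_integral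
       (\<Sum>r\<in>{0..m}. \<Sum>s\<in>{0..r}. co r s * I r)) {0<..}"
    by (intro has_integral_sum has_integral_mult_right hI) auto
  have pt: "x powr q / (1 + x) powr (p + q) * x ^ (u*j) * frakM_poly m p q u x =
      (\<Sum>r\<in>{0..m}. \<Sum>s\<in>{0..r}. co r s * h r x)" if "x \<in> {0<..}" for x
  proof -
    have "x powr q / (1 + x) powr (p + q) * x ^ (u*j) * frakM_poly m p q u x =
      (\<Sum>r\<in>{0..m}. \<Sum>s\<in>{0..r}. co r s * (x powr q / (1 + x) powr (p + q) * x ^ (u*j) * (x ^ r * (1 + x) ^ (m - r))))"
      unfolding frakM_poly_def co_def by (simp add: sum_distrib_left mult_ac)
    also have "\<dots> = (\<Sum>r\<in>{0..m}. \<Sum>s\<in>{0..r}. co r s * h r x)"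
    proof (intro sum.cong refl)
      fix r s assume "r \<in> {0..m}"
      then have rm: "r \<le> m" by simp
      from that have xp: "x > 0" by simp
      show "co r s * (x powr q / (1 + x) powr (p + q) * x ^ (u*j) * (x ^ r * (1 + x) ^ (m - r))) = co r s * h r x"
        unfolding h_def by (subst pw[OF xp rm]) (rule refl)
    qed
    finally show ?thesis .
  qed
  define a where "a = q + 1 + real (u*j)"
  define f where "f = (\<lambda>x. pochhammer ((x + q + 1) / real u) m)"
  define K0 where "K0 = (-1)^m * Gamma (p - real m - 1 - real (u*j)) * Gamma a / Gamma (p + q - real m)"
  have a_pos: "a > 0" unfolding a_def using q of_nat_0_le_iff[of "u*j"] by linarith
  have c_pos: "p + q - real m > 0" using q pj of_nat_0_le_iff[of "u*j"] by linarith
  have Rf: "Rep m f"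
  proof -
    have "Rep (0 + m) (\<lambda>x. 1 * pochhammer ((q + 1) / real u + (1 / real u) * x) m)"
      by (rule Rep_poch[OF Rep_const])
    moreover have "(\<lambda>x. 1 * pochhammer ((q + 1) / real u + (1 / real u) * x) m) = f"
      unfolding f_def using u by (intro ext) (simp add: add_divide_distrib algebra_simps)
    ultimately show ?thesis by simp
  qed
  have term_eq: "co r s * I r = K0 * (pochhammer a r / fact r * ((-1)^s * real (r choose s) * f (real s)))"
    for r s
  proof -
    have g1: "Gamma (q + real (u*j) + real r + 1) = pochhammer a r * Gamma a"
      using Gamma_shift[OF a_pos, of r] unfolding a_def by (simp add: algebra_simps)
    have g2: "Gamma (p + q - real m + real r) = pochhammer (p + q - real m) r * Gamma (p + q - real m)"
      using Gamma_shift[OF c_pos, of r] .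
    have pp: "pochhammer (p + q - real m) r > 0" using c_pos by (intro pochhammer_pos) 
    have gp: "Gamma (p + q - real m) > 0" using c_pos by simp
    show ?thesis unfolding co_def I_def K0_def g1 g2 f_def using pp gp
      by (simp add: field_simps power_add)
  qed
  have val: "(\<Sum>r\<in>{0..m}. \<Sum>s\<in>{0..r}. co r s * I r) =
     Gamma (p - real m - 1 - real (u*j)) / Gamma (p + q - real m) * (-1)^m *
        Gamma (q + 1 + real (u*j)) * pochhammer (- real j) m"
  proof -
    have "(\<Sum>r\<in>{0..m}. \<Sum>s\<in>{0..r}. co r s * I r) =
        K0 * (\<Sum>r\<le>m. pochhammer a r / fact r * (\<Sum>s\<le>r. (-1)^s * real (r choose s) * f (real s)))"
      unfolding term_eq by (simp add: sum_distrib_left atLeast0AtMost)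
    also have "\<dots> = K0 * f (-a)" using Rep_newton[OF Rf order_refl] by simp
    also have "f (-a) = pochhammer (- real j) m"
      unfolding f_def a_def using u by simp
    finally show ?thesis unfolding K0_def a_def by simp
  qed
  show ?thesis
    using sum_int unfolding val[symmetric]
    by (rule has_integral_spike[where S = "{}", rotated 2]) (use pt in auto)
qed




lemma PM: "pochhammer (real n + 1 - p) k * (-1)^k = pochhammer (p - real n - real k) k"
proof -
  have e1: "- (p - real n - 1) = real n + 1 - p" by simp
  have e2: "p - real n - 1 - of_nat k + 1 = p - real n - real k" by simp
  have "pochhammer (real n + 1 - p) k = (-1)^k * pochhammer (p - real n - real k) k"
    using pochhammer_minus[of "p - real n - 1" k] unfolding e1 e2 .
  then have "pochhammer (real n + 1 - p) k * (-1)^k = ((-1)^k * (-1)^k) * pochhammer (p - real n - real k) k"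
    by simp
  also have "(-1::real)^k * (-1)^k = 1" by (simp add: power_mult_distrib[symmetric])
  finally show ?thesis by simp
qed

lemma cj_eq:
  assumes "p - real n - real k > 0" "q > -1"
  shows "pochhammer (real n + 1 - p) k / pochhammer (q+1) k * (-1)^k =
     Gamma (p - real n) / Gamma (p - real n - real k) * Gamma (q+1) / Gamma (q + 1 + real k)"
proof -
  have g1: "Gamma (p - real n) = pochhammer (p - real n - real k) k * Gamma (p - real n - real k)"
    using Gamma_shift[OF assms(1), of k] by simp
  have g2: "Gamma (q + 1 + real k) = pochhammer (q + 1) k * Gamma (q + 1)"
    using Gamma_shift[of "q+1" k] assms(2) by simp
  have p1: "pochhammer (q+1) k > 0" using assms(2) by (intro pochhammer_pos) simp
  have p2: "Gamma (p - real n - real k) > 0" "Gamma (q+1) > 0" using assms by simp_all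
  have "pochhammer (real n + 1 - p) k / pochhammer (q+1) k * (-1)^k =
        pochhammer (p - real n - real k) k / pochhammer (q+1) k"
    using PM[of n p k] by (simp add: field_simps)
  also have "\<dots> = Gamma (p - real n) / Gamma (p - real n - real k) * Gamma (q+1) / Gamma (q + 1 + real k)"
    unfolding g1 g2 using p1 p2 by (simp add: field_simps)
  finally show ?thesis .
qed




theorem mainTheorem1:
  fixes u n m :: nat and p q :: real
  assumes "u > 0"
    and "p > real (u + 1) * real (max n m) + 1"
    and "q > -1"
  shows "((\<lambda>x. x powr q / (1 + x) powr (p + q) * M_poly n p q u x * frakM_poly m p q u x)
           has_integral
          (if n = m then fact n * Gamma (p - real n) * Gamma (q + 1 + real (u * n)) /
             ((p - 1 - real n - real (u * n)) * Gamma (p + q - real n)) else 0)) {0<..}"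
proof -
  define N where "N = max n m"
  have pN: "p > real (u * N) + real N + 1" using assms(2) unfolding N_def
    by (simp add: algebra_simps)
  have nN: "n \<le> N" "m \<le> N" unfolding N_def by auto
  have ujN: "real (u * j) \<le> real (u * N)" if "j \<le> n" for j
    using that nN by (simp add: mult_left_mono)
  have pj: "p - real m - 1 - real (u*j) > 0" if "j \<le> n" for j
    using ujN[OF that] pN nN by linarith
  have pn: "p - real n - real (u*j) > 1" if "j \<le> n" for j
    using ujN[OF that] pN nN by linarith
  define cj where "cj j = (-1)^n * pochhammer (q+1) (u*n) * ((-1)^j * real (n choose j) *
      (pochhammer (real n + 1 - p) (u*j) / pochhammer (q+1) (u*j) * (-1)^(u*j)))" for j
  define K where "K j = Gamma (p - real m - 1 - real (u*j)) / Gamma (p + q - real m) * (-1)^m *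
        Gamma (q + 1 + real (u*j)) * pochhammer (- real j) m" for j
  have int: "((\<lambda>x. \<Sum>j\<in>{0..n}. cj j * (x powr q / (1 + x) powr (p + q) * x ^ (u*j) * frakM_poly m p q u x))
      has_integral (\<Sum>j\<in>{0..n}. cj j * K j)) {0<..}"
  proof (rule has_integral_sum)
    fix j assume "j \<in> {0..n}"
    then have "j \<le> n" by simp
    show "((\<lambda>x. cj j * (x powr q / (1 + x) powr (p + q) * x ^ (u*j) * frakM_poly m p q u x))
      has_integral (cj j * K j)) {0<..}"
      unfolding K_def by (rule has_integral_mult_right, rule intA[OF assms(1) assms(3) pj[OF \<open>j \<le> n\<close>]])
  qed simp
  have pt: "x powr q / (1 + x) powr (p + q) * M_poly n p q u x * frakM_poly m p q u x =
     (\<Sum>j\<in>{0..n}. cj j * (x powr q / (1 + x) powr (p + q) * x ^ (u*j) * frakM_poly m p q u x))" for x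
  proof -
    have "M_poly n p q u x = (\<Sum>j\<in>{0..n}. cj j * x ^ (u*j))"
      unfolding M_poly_def cj_def sum_distrib_left
      by (intro sum.cong refl) (simp add: power_minus[of x] mult_ac)
    then show ?thesis by (simp add: sum_distrib_left sum_distrib_right mult_ac)
  qed
  have gp: "Gamma (p + q - real m) > 0" using pj[of 0] assms(3) by simp
  have val: "(\<Sum>j\<in>{0..n}. cj j * K j) =
     (if n = m then fact n * Gamma (p - real n) * Gamma (q + 1 + real (u * n)) /
             ((p - 1 - real n - real (u * n)) * Gamma (p + q - real n)) else 0)"
  proof (cases "n < m")
    case True
    have "K j = 0" if "j \<in> {0..n}" for j
      unfolding K_def using that True by (auto simp: pochhammer_eq_0_iff)
    then show ?thesis using True by simp
  next
    case False
    show ?thesis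
    proof (cases "n = m")
      case True
      have z: "K j = 0" if "j \<in> {0..n}" "j \<noteq> n" for j
        unfolding K_def using that True by (auto simp: pochhammer_eq_0_iff)
      have "(\<Sum>j\<in>{0..n}. cj j * K j) = (\<Sum>j\<in>{0..n}. if j = n then cj n * K n else 0)"
        by (rule sum.cong) (auto simp: z)
      also have "\<dots> = cj n * K n" by simp
      also have "\<dots> = fact n * Gamma (p - real n) * Gamma (q + 1 + real (u * n)) /
             ((p - 1 - real n - real (u * n)) * Gamma (p + q - real n))"
      proof -
        have pn': "p - real n - real (u*n) > 1" using pn[of n] by simp
        have c1: "pochhammer (real n + 1 - p) (u*n) / pochhammer (q+1) (u*n) * (-1)^(u*n) =
            Gamma (p - real n) / Gamma (p - real n - real (u*n)) * Gamma (q+1) / Gamma (q + 1 + real (u*n))"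
          by (rule cj_eq) (use pn' assms(3) in auto)
        have g3: "Gamma (p - real n - real (u*n)) = (p - real n - real (u*n) - 1) * Gamma (p - real n - real (u*n) - 1)"
          using Gamma_plus1[OF pos_not_nonpos_Int, of "p - real n - real (u*n) - 1"] pn' by simp
        have g4: "Gamma (q + 1 + real (u*n)) = pochhammer (q + 1) (u*n) * Gamma (q + 1)"
          using Gamma_shift[of "q+1" "u*n"] assms(3) by simp
        have pp: "pochhammer (q+1) (u*n) > 0" using assms(3) by (intro pochhammer_pos) simp
        have pos: "Gamma (p - real n - real (u*n) - 1) > 0" "Gamma (q+1) > 0" "Gamma (p + q - real n) > 0"
          using pn' assms(3) gp True by simp_all
        have cn: "cj n = Gamma (p - real n) / Gamma (p - real n - real (u*n)) * Gamma (q+1) / Gamma (q + 1 + real (u*n))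
             * pochhammer (q+1) (u*n)"
          unfolding cj_def c1[symmetric] by (simp add: power_add[symmetric])
        have kn: "K n = Gamma (p - real n - 1 - real (u*n)) / Gamma (p + q - real n) * Gamma (q + 1 + real (u*n)) * fact n"
          unfolding K_def True[symmetric] pochhammer_same by (simp add: power_add[symmetric])
        have e: "p - real n - 1 - real (u*n) = p - real n - real (u*n) - 1" by simp
        have cn2: "cj n = Gamma (p - real n) / Gamma (p - real n - real (u*n))"
          unfolding cn g4 using pp pos by simp
        define X where "X = p - real n - real (u*n)"
        define GX where "GX = Gamma (X - 1)"
        have X1: "X - 1 > 0" unfolding X_def using pn' by simp
        have GX: "GX > 0" unfolding GX_def using X1 by simp
        have g3': "Gamma X = (X - 1) * GX" unfolding X_def GX_def using g3 by simp
        have e2: "p - 1 - real n - real (u * n) = X - 1" unfolding X_def by simp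
        have "cj n * K n = Gamma (p - real n) / ((X - 1) * GX) * (GX / Gamma (p + q - real n) *
            Gamma (q + 1 + real (u*n)) * fact n)"
        proof -
          have cn3: "cj n = Gamma (p - real n) / ((X - 1) * GX)"
            using cn2 g3' unfolding X_def by simp
          have kn2: "K n = GX / Gamma (p + q - real n) * Gamma (q + 1 + real (u*n)) * fact n"
            using kn unfolding e GX_def X_def .
          show ?thesis unfolding cn3 kn2 ..
        qed
        also have "\<dots> = fact n * Gamma (p - real n) * Gamma (q + 1 + real (u * n)) /
             ((p - 1 - real n - real (u * n)) * Gamma (p + q - real n))"
          unfolding e2 using GX X1 pos(3) by (simp add: field_simps)
        finally show ?thesis .
      qed
      finally show ?thesis using True by simp
    next
      case False2: False
      with False have nm: "m < n" by simp
      define C0 where "C0 = (-1)^n * pochhammer (q+1) (u*n) * Gamma (p - real n) * Gamma (q+1) /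
          Gamma (p + q - real m) * (-1)^m"
      define g where "g x = pochhammer (-x) m * pochhammer ((p - real n) + (- real u) * x) (n - m - 1)" for x
      have Rg: "Rep (m + (n - m - 1)) g"
      proof -
        have "Rep (0 + m) (\<lambda>x. 1 * pochhammer (0 + (-1) * x) m)" by (rule Rep_poch[OF Rep_const])
        then have "Rep m (\<lambda>x. pochhammer (-x) m)" by simp
        from Rep_poch[OF this, where A="p - real n" and B="- real u" and t="n - m - 1"] show ?thesis
          unfolding g_def .
      qed
      have tm: "cj j * K j = C0 * ((-1)^j * real (n choose j) * g (real j))" if "j \<in> {0..n}" for j
      proof -
        from that have jn: "j \<le> n" by simp
        have pj': "p - real n - real (u*j) > 0" using pn[OF jn] by simp
        have c1: "pochhammer (real n + 1 - p) (u*j) / pochhammer (q+1) (u*j) * (-1)^(u*j) =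
            Gamma (p - real n) / Gamma (p - real n - real (u*j)) * Gamma (q+1) / Gamma (q + 1 + real (u*j))"
          by (rule cj_eq) (use pj' assms(3) in auto)
        have g5: "Gamma (p - real m - 1 - real (u*j)) =
            pochhammer (p - real n - real (u*j)) (n - m - 1) * Gamma (p - real n - real (u*j))"
        proof -
          have ee: "p - real n - real (u*j) + real (n - m - 1) = p - real m - 1 - real (u*j)"
            using nm by (simp add: of_nat_diff)
          show ?thesis using Gamma_shift[OF pj', of "n - m - 1"] unfolding ee .
        qed
        have pos: "Gamma (p - real n - real (u*j)) > 0" "Gamma (q + 1 + real (u*j)) > 0"
        proof -
          have "q + 1 + real (u*j) > 0" using assms(3) of_nat_0_le_iff[of "u*j"] by linarith
          then show "Gamma (p - real n - real (u*j)) > 0" "Gamma (q + 1 + real (u*j)) > 0"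
            using pj' by simp_all
        qed
        have e: "p - real n + - real u * real j = p - real n - real (u*j)" by simp
        show ?thesis unfolding cj_def K_def g_def C0_def c1 g5 e using pos gp
          by (simp add: field_simps)
      qed
      have "(\<Sum>j\<in>{0..n}. cj j * K j) = C0 * (\<Sum>j\<le>n. (-1)^j * real (n choose j) * g (real j))"
        using tm by (simp add: sum_distrib_left atLeast0AtMost)
      also have "\<dots> = 0" using Rep_alt_zero[OF Rg] nm by simp
      finally show ?thesis using False2 by simp
    qed
  qed
  show ?thesis using int unfolding val[symmetric] pt .
qed


end
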